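(* For every $t\in\mathbb Q_{\ge0}\cup\{\infty\}$ (written as a reduced fraction $p/q$ with $p,q\ge0$, $\infty=\frac10$), the word $\omega_t$ is a reduced word in the free group on $\{x,y,z\}$.
   Context: Modified lattice: the planar graph with vertex set $\mathbb Z^2$ whose edges are the horizontal unit segments $[(i,j),(i+1,j)]$, the vertical unit segments $[(i,j),(i,j+1)]$, and the diagonal segments of slope $-1$ joining $(i,j+1)$ and $(i+1,j)$. Words $\omega_t$: set $\omega_{0/1}=x$, $\omega_{1/0}=z$. For a reduced fraction $t=p/q\in(0,\infty)$, let $L_t$ be the segment from $(0,0)$ to $(q,p)$, oriented from $(0,0)$ to $(q,p)$. List the edges of the modified lattice whose relative interior meets $L_t$, in the order of the intersection points along $L_t$. A horizontal (resp. diagonal, vertical) edge contributes the letter $x$ (resp. $y$, $z$) if the midpoint of the edge is not on the right-hand side of the oriented segment $L_t$ (including the case that the midpoint lies on $L_t$), and contributes $x^{-1}$ (resp. $y^{-1}$, $z^{-1}$) if the midpoint is on the right-hand side. The word $\omega_t$ is the concatenation of these letters in order. *)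

theory Defs
  imports "HOL-Analysis.Analysis"
begin

text \<open>Generators of the free group F(x,y,z); a word is a list of letters,
  a letter being a generator together with a sign (True = g, False = g^-1).\<close>
datatype gen = GX | GY | GZ

type_synonym letter = "gen \<times> bool"

definition reduced_word :: "letter list \<Rightarrow> bool" where
  "reduced_word w \<longleftrightarrow>
     (\<forall>i. Suc i < length w \<longrightarrow>
        \<not> (fst (w ! i) = fst (w ! Suc i) \<and> snd (w ! i) \<noteq> snd (w ! Suc i)))"

datatype edge = HE int int | VE int int | DE int int

fun edge_ends :: "edge \<Rightarrow> (real \<times> real) \<times> (real \<times> real)" where
  "edge_ends (HE i j) = ((of_int i, of_int j), (of_int i + 1, of_int j))"
| "edge_ends (VE i j) = ((of_int i, of_int j), (of_int i, of_int j + 1))"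
| "edge_ends (DE i j) = ((of_int i, of_int j + 1), (of_int i + 1, of_int j))"

fun edge_gen :: "edge \<Rightarrow> gen" where
  "edge_gen (HE i j) = GX"
| "edge_gen (VE i j) = GZ"
| "edge_gen (DE i j) = GY"

definition edge_rel_interior :: "edge \<Rightarrow> (real \<times> real) set" where
  "edge_rel_interior e = open_segment (fst (edge_ends e)) (snd (edge_ends e))"

definition edge_midpoint :: "edge \<Rightarrow> real \<times> real" where
  "edge_midpoint e = midpoint (fst (edge_ends e)) (snd (edge_ends e))"

definition Lseg :: "nat \<Rightarrow> nat \<Rightarrow> (real \<times> real) set" where
  "Lseg p q = closed_segment (0, 0) (real q, real p)"

definition crossing_edges :: "nat \<Rightarrow> nat \<Rightarrow> edge set" where
  "crossing_edges p q = {e. edge_rel_interior e \<inter> Lseg p q \<noteq> {}}"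

definition cross_param :: "nat \<Rightarrow> nat \<Rightarrow> edge \<Rightarrow> real" where
  "cross_param p q e =
     (THE s. 0 \<le> s \<and> s \<le> 1 \<and> (s * real q, s * real p) \<in> edge_rel_interior e)"

definition right_side :: "nat \<Rightarrow> nat \<Rightarrow> real \<times> real \<Rightarrow> bool" where
  "right_side p q m \<longleftrightarrow> real q * snd m - real p * fst m < 0"

definition edge_letter :: "nat \<Rightarrow> nat \<Rightarrow> edge \<Rightarrow> letter" where
  "edge_letter p q e = (edge_gen e, \<not> right_side p q (edge_midpoint e))"

definition crossing_list :: "nat \<Rightarrow> nat \<Rightarrow> edge list" where
  "crossing_list p q =
     (THE es. set es = crossing_edges p q \<and> distinct es \<and>
              sorted_wrt (\<lambda>a b. cross_param p q a < cross_param p q b) es)"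

text \<open>omega_t for t = p/q (reduced fraction, q = 0 meaning t = infinity).\<close>
definition omega :: "nat \<Rightarrow> nat \<Rightarrow> letter list" where
  "omega p q =
     (if p = 0 then [(GX, True)]
      else if q = 0 then [(GZ, True)]
      else map (edge_letter p q) (crossing_list p q))"

end

theory Submission
  imports Defs
begin

lemma eri_HE: "z \<in> edge_rel_interior (HE i j) \<longleftrightarrow>
   snd z = of_int j \<and> of_int i < fst z \<and> fst z < of_int i + 1"
  apply (cases z)
  apply (simp add: edge_rel_interior_def in_segment(2))
  apply (auto simp: algebra_simps)
  apply (rule_tac x="fst z - of_int i" in exI) apply (auto simp: algebra_simps)
  done

lemma eri_VE: "z \<in> edge_rel_interior (VE i j) \<longleftrightarrow>
   fst z = of_int i \<and> of_int j < snd z \<and> snd z < of_int j + 1"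
  apply (cases z)
  apply (simp add: edge_rel_interior_def in_segment(2))
  apply (auto simp: algebra_simps)
  apply (rule_tac x="snd z - of_int j" in exI) apply (auto simp: algebra_simps)
  done

lemma eri_DE: "z \<in> edge_rel_interior (DE i j) \<longleftrightarrow>
   fst z + snd z = of_int i + of_int j + 1 \<and> of_int i < fst z \<and> fst z < of_int i + 1"
  apply (cases z)
  apply (simp add: edge_rel_interior_def in_segment(2))
  apply (auto simp: algebra_simps)
  apply (rule_tac x="fst z - of_int i" in exI) apply (auto simp: algebra_simps)
  done

lemma Lseg_iff: "z \<in> Lseg p q \<longleftrightarrow> (\<exists>s. 0 \<le> s \<and> s \<le> 1 \<and> z = (s * real q, s * real p))"
  unfolding Lseg_def in_segment(1) by (auto simp: algebra_simps)


lemma fl: "of_int i < (x::real) \<Longrightarrow> x < of_int i + 1 \<Longrightarrow> i = floor x"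
  by (metis floor_unique less_eq_real_def)

lemma ilt: "of_int i < (of_int k::real) \<longleftrightarrow> i < k" by simp

lemma eri_disj: "z \<in> edge_rel_interior e1 \<Longrightarrow> z \<in> edge_rel_interior e2 \<Longrightarrow> e1 = e2"
proof (cases e1; cases e2)
  fix i j i' j' assume a: "z \<in> edge_rel_interior e1" "z \<in> edge_rel_interior e2" "e1 = HE i j" "e2 = HE i' j'"
  then have h: "of_int i < fst z" "fst z < of_int i + 1" "of_int i' < fst z" "fst z < of_int i' + 1" "snd z = of_int j" "snd z = of_int j'"
    by (auto simp: eri_HE)
  then have "i = i'" using fl[OF h(1,2)] fl[OF h(3,4)] by simp
  moreover have "j = j'" using h by simp
  ultimately show "e1 = e2" using a by simp
next
  fix i j i' j' assume a: "z \<in> edge_rel_interior e1" "z \<in> edge_rel_interior e2" "e1 = VE i j" "e2 = VE i' j'"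
  then have h: "of_int j < snd z" "snd z < of_int j + 1" "of_int j' < snd z" "snd z < of_int j' + 1" "fst z = of_int i" "fst z = of_int i'"
    by (auto simp: eri_VE)
  then have "j = j'" using fl[OF h(1,2)] fl[OF h(3,4)] by simp
  moreover have "i = i'" using h by simp
  ultimately show "e1 = e2" using a by simp
next
  fix i j i' j' assume a: "z \<in> edge_rel_interior e1" "z \<in> edge_rel_interior e2" "e1 = DE i j" "e2 = DE i' j'"
  then have h: "of_int i < fst z" "fst z < of_int i + 1" "of_int i' < fst z" "fst z < of_int i' + 1"
     "fst z + snd z = of_int i + of_int j + 1" "fst z + snd z = of_int i' + of_int j' + 1"
    by (auto simp: eri_DE)
  then have ii: "i = i'" using fl[OF h(1,2)] fl[OF h(3,4)] by simp
  have "of_int i + of_int j = (of_int i' + of_int j' :: real)" using h by linarith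
  then have "j = j'" using ii by simp
  then show "e1 = e2" using a ii by simp
next
  fix i j i' j' assume "z \<in> edge_rel_interior e1" "z \<in> edge_rel_interior e2" "e1 = HE i j" "e2 = VE i' j'"
  then have "of_int i < (of_int i'::real)" "(of_int i'::real) < of_int (i + 1)" by (auto simp: eri_HE eri_VE)
  then show "e1 = e2" unfolding ilt by linarith
next
  fix i j i' j' assume "z \<in> edge_rel_interior e1" "z \<in> edge_rel_interior e2" "e1 = VE i j" "e2 = HE i' j'"
  then have "of_int i' < (of_int i::real)" "(of_int i::real) < of_int (i' + 1)" by (auto simp: eri_HE eri_VE)
  then show "e1 = e2" unfolding ilt by linarith
next
  fix i j i' j' assume "z \<in> edge_rel_interior e1" "z \<in> edge_rel_interior e2" "e1 = HE i j" "e2 = DE i' j'"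
  then have "of_int j' < (of_int j::real)" "(of_int j::real) < of_int (j' + 1)" by (auto simp: eri_HE eri_DE)
  then show "e1 = e2" unfolding ilt by linarith
next
  fix i j i' j' assume "z \<in> edge_rel_interior e1" "z \<in> edge_rel_interior e2" "e1 = DE i j" "e2 = HE i' j'"
  then have "of_int j < (of_int j'::real)" "(of_int j'::real) < of_int (j + 1)" by (auto simp: eri_HE eri_DE)
  then show "e1 = e2" unfolding ilt by linarith
next
  fix i j i' j' assume "z \<in> edge_rel_interior e1" "z \<in> edge_rel_interior e2" "e1 = VE i j" "e2 = DE i' j'"
  then have "of_int i' < (of_int i::real)" "(of_int i::real) < of_int (i' + 1)" by (auto simp: eri_VE eri_DE)
  then show "e1 = e2" unfolding ilt by linarith
next
  fix i j i' j' assume "z \<in> edge_rel_interior e1" "z \<in> edge_rel_interior e2" "e1 = DE i j" "e2 = VE i' j'"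
  then have "of_int i < (of_int i'::real)" "(of_int i'::real) < of_int (i + 1)" by (auto simp: eri_VE eri_DE)
  then show "e1 = e2" unfolding ilt by linarith
qed

lemma no_lattice: "(of_int a, of_int b) \<notin> edge_rel_interior e"
proof (cases e)
  case (HE i j)
  show ?thesis
  proof
    assume "(of_int a, of_int b) \<in> edge_rel_interior e"
    then have "of_int i < (of_int a::real)" "(of_int a::real) < of_int (i + 1)" using HE by (auto simp: eri_HE)
    then show False unfolding ilt by linarith
  qed
next
  case (VE i j)
  show ?thesis
  proof
    assume "(of_int a, of_int b) \<in> edge_rel_interior e"
    then have "of_int j < (of_int b::real)" "(of_int b::real) < of_int (j + 1)" using VE by (auto simp: eri_VE)
    then show False unfolding ilt by linarith
  qed
next
  case (DE i j)
  show ?thesis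
  proof
    assume "(of_int a, of_int b) \<in> edge_rel_interior e"
    then have "of_int i < (of_int a::real)" "(of_int a::real) < of_int (i + 1)" using DE by (auto simp: eri_DE)
    then show False unfolding ilt by linarith
  qed
qed

lemma param_unique:
  assumes "p > 0" "q > 0" "(s * real q, s * real p) \<in> edge_rel_interior e"
    "(t * real q, t * real p) \<in> edge_rel_interior e"
  shows "s = t"
proof (cases e)
  case (HE i j)
  then have "s * real p = t * real p" using assms by (auto simp: eri_HE)
  then show ?thesis using assms by simp
next
  case (VE i j)
  then have "s * real q = t * real q" using assms by (auto simp: eri_VE)
  then show ?thesis using assms by simp
next
  case (DE i j)
  then have "s * (real q + real p) = t * (real q + real p)" using assms by (auto simp: eri_DE algebra_simps)
  then show ?thesis using assms by simp
qed

lemma cross_param_eq: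
  assumes "p > 0" "q > 0" "0 \<le> s" "s \<le> 1" "(s * real q, s * real p) \<in> edge_rel_interior e"
  shows "cross_param p q e = s"
  unfolding cross_param_def
  apply (rule the_equality)
  using assms param_unique[OF assms(1,2)] by auto

lemma crossing_iff: "e \<in> crossing_edges p q \<longleftrightarrow>
   (\<exists>s. 0 \<le> s \<and> s \<le> 1 \<and> (s * real q, s * real p) \<in> edge_rel_interior e)"
proof
  assume "e \<in> crossing_edges p q"
  then obtain z where "z \<in> edge_rel_interior e" "z \<in> Lseg p q" unfolding crossing_edges_def by blast
  then show "\<exists>s. 0 \<le> s \<and> s \<le> 1 \<and> (s * real q, s * real p) \<in> edge_rel_interior e"
    unfolding Lseg_iff by blast
next
  assume "\<exists>s. 0 \<le> s \<and> s \<le> 1 \<and> (s * real q, s * real p) \<in> edge_rel_interior e"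
  then obtain s where "0 \<le> s" "s \<le> 1" "(s * real q, s * real p) \<in> edge_rel_interior e" by blast
  moreover have "(s * real q, s * real p) \<in> Lseg p q" using calculation unfolding Lseg_iff by blast
  ultimately show "e \<in> crossing_edges p q" unfolding crossing_edges_def by blast
qed

lemma param_open:
  assumes "0 \<le> s" "s \<le> 1" "(s * real q, s * real p) \<in> edge_rel_interior e"
  shows "0 < s \<and> s < 1"
proof -
  have "s \<noteq> 0" using assms no_lattice[of 0 0 e] by auto
  moreover have "s \<noteq> 1" using assms no_lattice[of "int q" "int p" e] by auto
  ultimately show ?thesis using assms by auto
qed


lemma L0:
  assumes "coprime p q" "p > 0" "q > 0" "0 < s" "s < 1"
    "s * real q = of_int a" "s * real p = of_int b"
  shows False
proof -
  have "real_of_int (a * int p) = real_of_int (b * int q)"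
    using assms(6,7) by (metis mult.commute mult.left_commute of_int_mult of_int_of_nat_eq)
  then have e: "a * int p = b * int q" by (simp only: of_int_eq_iff)
  have "int q dvd a * int p" using e by simp
  moreover have "coprime (int q) (int p)" using assms(1) by (simp add: coprime_commute)
  ultimately have d: "int q dvd a" using coprime_dvd_mult_left_iff by blast
  have "0 < real_of_int a" using assms by (metis mult_pos_pos of_nat_0_less_iff)
  then have "0 < a" by simp
  have "s * real q < 1 * real q" using assms by (intro mult_strict_right_mono) auto
  then have "real_of_int a < real_of_int (int q)" using assms by simp
  then have "a < int q" by (simp only: of_int_less_iff)
  with \<open>0 < a\<close> d show False using zdvd_imp_le by fastforce
qed

lemma cr: "0 \<le> s \<Longrightarrow> s \<le> 1 \<Longrightarrow> p > 0 \<Longrightarrow> q > 0 \<Longrightarrow>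
   (s * real q, s * real p) \<in> edge_rel_interior e \<Longrightarrow>
   e \<in> crossing_edges p q \<and> cross_param p q e = s"
  apply (rule conjI)
   apply (subst crossing_iff) apply blast
  apply (rule cross_param_eq) apply assumption+
  done

lemma frac_lt: "(x::real) \<noteq> of_int (floor x) \<Longrightarrow> of_int (floor x) < x"
proof (rule ccontr)
  assume a: "x \<noteq> of_int (floor x)" and "\<not> of_int (floor x) < x"
  then have "x \<le> of_int (floor x)" by simp
  then have "x = of_int (floor x)" using of_int_floor_le[of x] by (rule antisym)
  with a show False by contradiction
qed

lemma fl2: "(x::real) < of_int (floor x) + 1"
  using floor_le_iff[of x "floor x"] by simp

lemma mkVE:
  assumes "coprime p q" "p > 0" "q > 0" "0 < s" "s < 1" "s * real q = of_int n"
  shows "VE n (floor (s * real p)) \<in> crossing_edges p q \<and> cross_param p q (VE n (floor (s * real p))) = s"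
proof -
  have ne: "s * real p \<noteq> of_int (floor (s * real p))"
  proof
    assume h: "s * real p = of_int (floor (s * real p))"
    show False by (rule L0[OF assms(1-6) h])
  qed
  have f1: "of_int (floor (s * real p)) < s * real p" by (rule frac_lt[OF ne])
  have f2: "s * real p < of_int (floor (s * real p)) + 1" by (rule fl2)
  have m: "(s * real q, s * real p) \<in> edge_rel_interior (VE n (floor (s * real p)))"
    unfolding eri_VE fst_conv snd_conv using assms(6) f1 f2 by blast
  have "0 \<le> s" "s \<le> 1" using assms(4,5) by auto
  from cr[OF this assms(2,3) m] show ?thesis .
qed

lemma mkHE:
  assumes "coprime p q" "p > 0" "q > 0" "0 < s" "s < 1" "s * real p = of_int m"
  shows "HE (floor (s * real q)) m \<in> crossing_edges p q \<and> cross_param p q (HE (floor (s * real q)) m) = s"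
proof -
  have ne: "s * real q \<noteq> of_int (floor (s * real q))"
  proof
    assume h: "s * real q = of_int (floor (s * real q))"
    show False by (rule L0[OF assms(1-5) h assms(6)])
  qed
  have f1: "of_int (floor (s * real q)) < s * real q" by (rule frac_lt[OF ne])
  have f2: "s * real q < of_int (floor (s * real q)) + 1" by (rule fl2)
  have mm: "(s * real q, s * real p) \<in> edge_rel_interior (HE (floor (s * real q)) m)"
    unfolding eri_HE fst_conv snd_conv using assms(6) f1 f2 by blast
  have "0 \<le> s" "s \<le> 1" using assms(4,5) by auto
  from cr[OF this assms(2,3) mm] show ?thesis .
qed

lemma mkDE:
  assumes "coprime p q" "p > 0" "q > 0" "0 < s" "s < 1" "s * real q + s * real p = of_int k"
  shows "\<exists>e. e \<in> crossing_edges p q \<and> cross_param p q e = s"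
proof -
  have ne: "s * real q \<noteq> of_int (floor (s * real q))"
  proof
    assume h: "s * real q = of_int (floor (s * real q))"
    have "s * real p = of_int k - of_int (floor (s * real q))" using assms(6) h by linarith
    then have h2: "s * real p = of_int (k - floor (s * real q))" by simp
    show False by (rule L0[OF assms(1-5) h h2])
  qed
  have f1: "of_int (floor (s * real q)) < s * real q" by (rule frac_lt[OF ne])
  have f2: "s * real q < of_int (floor (s * real q)) + 1" by (rule fl2)
  have e: "s * real q + s * real p = of_int (floor (s * real q)) + of_int (k - floor (s * real q) - 1) + 1"
    using assms(6) by simp
  have mm: "(s * real q, s * real p) \<in> edge_rel_interior (DE (floor (s * real q)) (k - floor (s * real q) - 1))"
    unfolding eri_DE fst_conv snd_conv using e f1 f2 by blast
  have "0 \<le> s" "s \<le> 1" using assms(4,5) by auto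
  from cr[OF this assms(2,3) mm] show ?thesis by blast
qed

lemma int_step: "i < (j::int) \<Longrightarrow> real_of_int i + 1 \<le> real_of_int j"
  proof - assume "i < j" then have "i + 1 \<le> j" by simp then have "real_of_int (i + 1) \<le> real_of_int j" by (simp only: of_int_le_iff) then show ?thesis by simp qed

lemma between:
  assumes cp: "coprime p q" and pq: "p > 0" "q > 0"
    and e1: "e1 \<in> crossing_edges p q" and e2: "e2 \<in> crossing_edges p q"
    and lt: "cross_param p q e1 < cross_param p q e2"
    and g: "edge_gen e1 = edge_gen e2"
  shows "\<exists>e\<in>crossing_edges p q. cross_param p q e1 < cross_param p q e \<and> cross_param p q e < cross_param p q e2"
proof -
  obtain s1 where s1: "0 \<le> s1" "s1 \<le> 1" "(s1 * real q, s1 * real p) \<in> edge_rel_interior e1"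
    using e1 crossing_iff by blast
  obtain s2 where s2: "0 \<le> s2" "s2 \<le> 1" "(s2 * real q, s2 * real p) \<in> edge_rel_interior e2"
    using e2 crossing_iff by blast
  have c1: "cross_param p q e1 = s1" using cross_param_eq pq s1 by blast
  have c2: "cross_param p q e2 = s2" using cross_param_eq pq s2 by blast
  have o1: "0 < s1" "s1 < 1" using param_open s1 by auto
  have o2: "0 < s2" "s2 < 1" using param_open s2 by auto
  have lt': "s1 < s2" using lt c1 c2 by simp
  have qp: "s1 * real q < s2 * real q" "s1 * real p < s2 * real p" using lt' pq by auto
  have rq: "real q > 0" "real p > 0" using pq by auto
  show ?thesis
  proof (cases e1)
    case (HE i j)
    then obtain i' j' where E2: "e2 = HE i' j'" using g by (cases e2) auto
    have h1: "s1 * real p = of_int j" "of_int i < s1 * real q" "s1 * real q < of_int i + 1"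
      using s1(3) HE by (auto simp: eri_HE)
    have h2: "s2 * real p = of_int j'" "of_int i' < s2 * real q" "s2 * real q < of_int i' + 1"
      using s2(3) E2 by (auto simp: eri_HE)
    have "real_of_int j < real_of_int j'" using h1(1) h2(1) qp(2) by linarith
    then have "j < j'" by (simp only: of_int_less_iff)
    then have jj: "of_int j + 1 \<le> real_of_int j'" by (rule int_step)
    define k where "k = i + j + 1"
    define s where "s = of_int k / (real q + real p)"
    have "s * real q + s * real p = s * (real q + real p)" by (simp add: algebra_simps)
    also have "\<dots> = of_int k" using rq unfolding s_def by simp
    finally have sk: "s * real q + s * real p = of_int k" .
    have kk: "real_of_int k = of_int i + of_int j + 1" unfolding k_def by simp
    have d1: "s1 * (real q + real p) = s1 * real q + s1 * real p" "s2 * (real q + real p) = s2 * real q + s2 * real p"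
      by (simp_all add: algebra_simps)
    have "s1 * (real q + real p) < of_int k" using h1 kk d1 by linarith
    then have a: "s1 < s" unfolding s_def using rq by (simp add: pos_less_divide_eq)
    have "of_int k < s2 * (real q + real p)" using h1 h2 jj qp kk d1 by linarith
    then have b: "s < s2" unfolding s_def using rq by (simp add: pos_divide_less_eq)
    have "0 < s" "s < 1" using a b o1 o2 by linarith+
    from mkDE[OF cp pq this sk] obtain e where "e \<in> crossing_edges p q" "cross_param p q e = s"
      by blast
    then show ?thesis using a b c1 c2 by auto
  next
    case (VE i j)
    then obtain i' j' where E2: "e2 = VE i' j'" using g by (cases e2) auto
    have h1: "s1 * real q = of_int i" "of_int j < s1 * real p" "s1 * real p < of_int j + 1"
      using s1(3) VE by (auto simp: eri_VE)
    have h2: "s2 * real q = of_int i'" "of_int j' < s2 * real p" "s2 * real p < of_int j' + 1"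
      using s2(3) E2 by (auto simp: eri_VE)
    have "real_of_int i < real_of_int i'" using h1(1) h2(1) qp(1) by linarith
    then have "i < i'" by (simp only: of_int_less_iff)
    then have ii: "of_int i + 1 \<le> real_of_int i'" by (rule int_step)
    define k where "k = i + j + 1"
    define s where "s = of_int k / (real q + real p)"
    have "s * real q + s * real p = s * (real q + real p)" by (simp add: algebra_simps)
    also have "\<dots> = of_int k" using rq unfolding s_def by simp
    finally have sk: "s * real q + s * real p = of_int k" .
    have kk: "real_of_int k = of_int i + of_int j + 1" unfolding k_def by simp
    have d1: "s1 * (real q + real p) = s1 * real q + s1 * real p" "s2 * (real q + real p) = s2 * real q + s2 * real p"
      by (simp_all add: algebra_simps)
    have "s1 * (real q + real p) < of_int k" using h1 kk d1 by linarith
    then have a: "s1 < s" unfolding s_def using rq by (simp add: pos_less_divide_eq)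
    have "of_int k < s2 * (real q + real p)" using h1 h2 ii qp kk d1 by linarith
    then have b: "s < s2" unfolding s_def using rq by (simp add: pos_divide_less_eq)
    have "0 < s" "s < 1" using a b o1 o2 by linarith+
    from mkDE[OF cp pq this sk] obtain e where "e \<in> crossing_edges p q" "cross_param p q e = s"
      by blast
    then show ?thesis using a b c1 c2 by auto
  next
    case (DE i j)
    then obtain i' j' where E2: "e2 = DE i' j'" using g by (cases e2) auto
    have h1: "s1 * real q + s1 * real p = of_int i + of_int j + 1" "of_int i < s1 * real q" "s1 * real q < of_int i + 1"
      using s1(3) DE by (auto simp: eri_DE)
    have h2: "s2 * real q + s2 * real p = of_int i' + of_int j' + 1" "of_int i' < s2 * real q" "s2 * real q < of_int i' + 1"
      using s2(3) E2 by (auto simp: eri_DE)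
    have "real_of_int i + real_of_int j < real_of_int i' + real_of_int j'" using h1(1) h2(1) qp by linarith
    then have "real_of_int (i + j) < real_of_int (i' + j')" by simp
    then have "i + j < i' + j'" by (simp only: of_int_less_iff)
    show ?thesis
    proof (cases "i < i'")
      case True
      then have ii: "of_int i + 1 \<le> real_of_int i'" by (rule int_step)
      define s where "s = of_int (i + 1) / real q"
      have sk: "s * real q = of_int (i + 1)" using rq unfolding s_def by (simp add: field_simps)
      have "s1 * real q < of_int (i + 1)" using h1 by simp
      then have a: "s1 < s" unfolding s_def using rq by (simp add: pos_less_divide_eq)
      have "of_int (i + 1) < s2 * real q" using h2 ii by simp
      then have b: "s < s2" unfolding s_def using rq by (simp add: pos_divide_less_eq)
      have "0 < s" "s < 1" using a b o1 o2 by linarith+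
      note m = mkVE[OF cp pq this sk]
      show ?thesis using m a b c1 c2 by (intro bexI[of _ "VE (i+1) (floor (s*real p))"]) auto
    next
      case False
      then have "j < j'" using \<open>i + j < i' + j'\<close> by simp
      then have jj: "of_int j + 1 \<le> real_of_int j'" by (rule int_step)
      have ii': "real_of_int i' \<le> of_int i" using False by simp
      define s where "s = of_int (j + 1) / real p"
      have sk: "s * real p = of_int (j + 1)" using rq unfolding s_def by (simp add: field_simps)
      have "s1 * real p < of_int (j + 1)" using h1 by simp
      then have a: "s1 < s" unfolding s_def using rq by (simp add: pos_less_divide_eq)
      have "of_int (j + 1) < s2 * real p" using h2 jj by simp
      then have b: "s < s2" unfolding s_def using rq by (simp add: pos_divide_less_eq)
      have "0 < s" "s < 1" using a b o1 o2 by linarith+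
      note m = mkHE[OF cp pq this sk]
      show ?thesis using m a b c1 c2 by (intro bexI[of _ "HE (floor (s*real q)) (j+1)"]) auto
    qed
  qed
qed


lemma rng: "-2 < real_of_int i \<Longrightarrow> real_of_int i < real n + 1 \<Longrightarrow> i \<in> {-1..int n}"
proof -
  assume a: "-2 < real_of_int i" "real_of_int i < real n + 1"
  have "real_of_int (-2) < real_of_int i" using a by simp
  then have "-2 < i" by (simp only: of_int_less_iff)
  have "real_of_int i < real_of_int (int n + 1)" using a by simp
  then have "i < int n + 1" by (simp only: of_int_less_iff)
  with \<open>-2 < i\<close> show ?thesis by simp
qed

lemma fin_cross: "finite (crossing_edges p q)"
proof -
  define S where "S = {-1..int q} \<times> {-1..int p}"
  have fS: "finite S" unfolding S_def by simp
  have sub: "crossing_edges p q \<subseteq> (\<lambda>(i,j). HE i j) ` S \<union> (\<lambda>(i,j). VE i j) ` S \<union> (\<lambda>(i,j). DE i j) ` S"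
  proof
    fix e assume "e \<in> crossing_edges p q"
    then obtain s where s: "0 \<le> s" "s \<le> 1" "(s * real q, s * real p) \<in> edge_rel_interior e"
      using crossing_iff by blast
    have X: "0 \<le> s * real q" "s * real q \<le> real q" using s(1,2) by (auto simp: mult_left_le_one_le)
    have Y: "0 \<le> s * real p" "s * real p \<le> real p" using s(1,2) by (auto simp: mult_left_le_one_le)
    show "e \<in> (\<lambda>(i,j). HE i j) ` S \<union> (\<lambda>(i,j). VE i j) ` S \<union> (\<lambda>(i,j). DE i j) ` S"
    proof (cases e)
      case (HE i j)
      then have h: "s * real p = of_int j" "of_int i < s * real q" "s * real q < of_int i + 1"
        using s(3) by (auto simp: eri_HE)
      have "i \<in> {-1..int q}" using h X by (intro rng) linarith+
      moreover have "j \<in> {-1..int p}" using h Y by (intro rng) linarith+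
      ultimately have "(i,j) \<in> S" unfolding S_def by blast
      then show ?thesis using HE by blast
    next
      case (VE i j)
      then have h: "s * real q = of_int i" "of_int j < s * real p" "s * real p < of_int j + 1"
        using s(3) by (auto simp: eri_VE)
      have "i \<in> {-1..int q}" using h X by (intro rng) linarith+
      moreover have "j \<in> {-1..int p}" using h Y by (intro rng) linarith+
      ultimately have "(i,j) \<in> S" unfolding S_def by blast
      then show ?thesis using VE by blast
    next
      case (DE i j)
      then have h: "s * real q + s * real p = of_int i + of_int j + 1" "of_int i < s * real q" "s * real q < of_int i + 1"
        using s(3) by (auto simp: eri_DE)
      have "i \<in> {-1..int q}" using h X by (intro rng) linarith+
      moreover have "j \<in> {-1..int p}" using h X Y by (intro rng) linarith+
      ultimately have "(i,j) \<in> S" unfolding S_def by blast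
      then show ?thesis using DE by blast
    qed
  qed
  show ?thesis by (rule finite_subset[OF sub]) (use fS in auto)
qed

lemma inj_cp:
  assumes "p > 0" "q > 0"
  shows "inj_on (cross_param p q) (crossing_edges p q)"
proof
  fix e1 e2 assume e1: "e1 \<in> crossing_edges p q" and e2: "e2 \<in> crossing_edges p q"
    and eq: "cross_param p q e1 = cross_param p q e2"
  obtain s1 where s1: "0 \<le> s1" "s1 \<le> 1" "(s1 * real q, s1 * real p) \<in> edge_rel_interior e1"
    using e1 crossing_iff by blast
  obtain s2 where s2: "0 \<le> s2" "s2 \<le> 1" "(s2 * real q, s2 * real p) \<in> edge_rel_interior e2"
    using e2 crossing_iff by blast
  have "s1 = s2" using cross_param_eq[OF assms s1] cross_param_eq[OF assms s2] eq by simp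
  then show "e1 = e2" using eri_disj s1(3) s2(3) by simp
qed

lemma crossing_list_props:
  assumes "p > 0" "q > 0"
  shows "set (crossing_list p q) = crossing_edges p q \<and> distinct (crossing_list p q) \<and>
     sorted_wrt (\<lambda>a b. cross_param p q a < cross_param p q b) (crossing_list p q)"
proof -
  let ?C = "crossing_edges p q" and ?f = "cross_param p q"
  let ?P = "\<lambda>es. set es = ?C \<and> distinct es \<and> sorted_wrt (\<lambda>a b. ?f a < ?f b) es"
  have inj: "inj_on ?f ?C" by (rule inj_cp[OF assms])
  have fin: "finite (?f ` ?C)" using fin_cross by blast
  define L where "L = sorted_list_of_set (?f ` ?C)"
  define es where "es = map (inv_into ?C ?f) L"
  have sL: "set L = ?f ` ?C" unfolding L_def using fin by (rule set_sorted_list_of_set)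
  have stL: "sorted_wrt (<) L" unfolding L_def by (rule strict_sorted_list_of_set)
  have dL: "distinct L" unfolding L_def by (rule distinct_sorted_list_of_set)
  have "set es = inv_into ?C ?f ` set L" unfolding es_def by (rule set_map)
  also have "\<dots> = ?C" unfolding sL by (rule inv_into_image_cancel[OF inj order_refl])
  finally have s1: "set es = ?C" .
  have ii: "inj_on (inv_into ?C ?f) (set L)" unfolding sL by (rule inj_on_inv_into[OF order_refl])
  have s2: "distinct es" unfolding es_def distinct_map using dL ii by blast
  have s3: "sorted_wrt (\<lambda>a b. ?f a < ?f b) es" unfolding es_def sorted_wrt_map
  proof (rule sorted_wrt_mono_rel[OF _ stL])
    fix x y assume xy: "x \<in> set L" "y \<in> set L" "x < y"
    have "?f (inv_into ?C ?f x) = x" using xy(1) unfolding sL by (rule f_inv_into_f)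
    moreover have "?f (inv_into ?C ?f y) = y" using xy(2) unfolding sL by (rule f_inv_into_f)
    ultimately show "?f (inv_into ?C ?f x) < ?f (inv_into ?C ?f y)" using xy(3) by simp
  qed
  have ex: "?P es" using s1 s2 s3 by blast
  have un: "es' = es" if h: "?P es'" for es'
  proof -
    have a1: "sorted_wrt (<) (map ?f es)" using s3 by (simp add: sorted_wrt_map)
    have a2: "sorted_wrt (<) (map ?f es')" using h by (simp add: sorted_wrt_map)
    have "set (map ?f es') = set (map ?f es)" using s1 h by simp
    then have "map ?f es' = map ?f es" by (rule strict_sorted_equal[OF a1 a2])
    moreover have "inj_on ?f (set es' \<union> set es)" using inj s1 h by simp
    ultimately show ?thesis using inj_on_map_eq_map by blast
  qed
  have "?P (THE es. ?P es)" by (rule theI[of ?P es, OF ex un])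
  then show ?thesis unfolding crossing_list_def .
qed


theorem proposition3p3:
  fixes p q :: nat
  assumes "coprime p q"
  shows "reduced_word (omega p q)"
proof (cases "p = 0 \<or> q = 0")
  case True
  then have "length (omega p q) = 1" unfolding omega_def by auto
  then show ?thesis unfolding reduced_word_def by simp
next
  case False
  then have pq: "p > 0" "q > 0" by auto
  let ?es = "crossing_list p q" and ?f = "cross_param p q"
  have om: "omega p q = map (edge_letter p q) ?es" unfolding omega_def using False by simp
  note P = crossing_list_props[OF pq]
  have sset: "set ?es = crossing_edges p q" and srt: "sorted_wrt (\<lambda>a b. ?f a < ?f b) ?es"
    using P by blast+
  show ?thesis unfolding reduced_word_def
  proof (intro allI impI)
    fix i assume il: "Suc i < length (omega p q)"
    then have il': "Suc i < length ?es" using om by simp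
    have fst_eq: "fst (omega p q ! k) = edge_gen (?es ! k)" if "k < length ?es" for k
      using that unfolding om by (simp add: edge_letter_def)
    have "edge_gen (?es ! i) \<noteq> edge_gen (?es ! Suc i)"
    proof
      assume g: "edge_gen (?es ! i) = edge_gen (?es ! Suc i)"
      have m1: "?es ! i \<in> crossing_edges p q" using il' sset nth_mem[of i ?es] by simp
      have m2: "?es ! Suc i \<in> crossing_edges p q" using il' sset nth_mem[of "Suc i" ?es] by simp
      have lt: "?f (?es ! i) < ?f (?es ! Suc i)" using sorted_wrt_nth_less[OF srt _ il'] by simp
      obtain e where e: "e \<in> crossing_edges p q" "?f (?es ! i) < ?f e" "?f e < ?f (?es ! Suc i)"
        using between[OF assms pq m1 m2 lt g] by blast
      obtain k where k: "k < length ?es" "?es ! k = e" using e(1) sset in_set_conv_nth[of e ?es] by auto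
      show False
      proof (cases "k \<le> i")
        case True
        have "?f (?es ! k) \<le> ?f (?es ! i)"
        proof (cases "k = i")
          case False
          then have "k < i" using True by simp
          then show ?thesis using sorted_wrt_nth_less[OF srt, of k i] il' by simp
        qed simp
        then show False using e k by simp
      next
        case False
        have "?f (?es ! Suc i) \<le> ?f (?es ! k)"
        proof (cases "k = Suc i")
          case False
          then have "Suc i < k" using \<open>\<not> k \<le> i\<close> by simp
          then show ?thesis using sorted_wrt_nth_less[OF srt, of "Suc i" k] k by simp
        qed simp
        then show False using e k by simp
      qed
    qed
    then show "\<not> (fst (omega p q ! i) = fst (omega p q ! Suc i) \<and> snd (omega p q ! i) \<noteq> snd (omega p q ! Suc i))"
      using fst_eq[of i] fst_eq[of "Suc i"] il' by simp
  qed
qed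

end
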